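(* Let $\mathcal J$ be a dyadic integer and let $K=\sum_{s\ge\mathcal J,\,s\text{ dyadic}}K_s$ and $L=\sum_{s\ge\mathcal J,\,s\text{ dyadic}}L_s$ be CZ kernels, where each $K_s$, $L_s$ is a CZ building block of scale $s$. Then $K*L$ is also a CZ kernel which is a dyadic sum of CZ building blocks of scales $\ge\mathcal J$, and $$\|K*L\|_{CZ}\le C\|K\|_{CZ}\|L\|_{CZ},$$ with a constant $C$ independent of $\mathcal J$.
   Context: Dyadic integers are powers of $2$. Fix a universal $\omega>0$. For dyadic $s$, a kernel $K:\mathbb Z\to\mathbb C$ is a CZ building block of scale $s$ with constant $D>0$ if (i) $\sum_xK(x)=0$; (ii) $\operatorname{supp}K\subset[-s,s]$; (iii) $\sum_x|K(x)|^2\le D^2/s$; (iv) $\sum_x|K(x+h)-K(x)|^2\le \frac{D^2}{s}(\frac{|h|}{s})^\omega$ for all $h\in\mathbb Z$. A CZ kernel is $K=\sum_{s\text{ dyadic}}K_s$ with each $K_s$ a CZ building block of scale $s$; $\|K\|_{CZ}$ is the infimum over such representations of the supremum of the constants $D$ of the blocks. Convolution is on $\mathbb Z$. *)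

theory Defs
  imports "HOL-Analysis.Analysis"
begin

text \<open>Kernels are functions int \<Rightarrow> complex. Dyadic integers are 2^k, k a natural number.
  The universal exponent omega is an explicit parameter.\<close>

definition cz_block :: "real \<Rightarrow> int \<Rightarrow> real \<Rightarrow> (int \<Rightarrow> complex) \<Rightarrow> bool" where
  "cz_block \<omega> s D K \<longleftrightarrow>
     D > 0 \<and>
     (\<Sum>\<^sub>\<infinity>x. K x) = 0 \<and>
     (\<forall>x. K x \<noteq> 0 \<longrightarrow> -s \<le> x \<and> x \<le> s) \<and>
     (\<Sum>\<^sub>\<infinity>x. (cmod (K x))\<^sup>2) \<le> D\<^sup>2 / real_of_int s \<and>
     (\<forall>h::int. (\<Sum>\<^sub>\<infinity>x. (cmod (K (x + h) - K x))\<^sup>2)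
                 \<le> D\<^sup>2 / real_of_int s * (real_of_int \<bar>h\<bar> / real_of_int s) powr \<omega>)"

definition cz_rep :: "real \<Rightarrow> nat \<Rightarrow> real \<Rightarrow> (int \<Rightarrow> complex) \<Rightarrow> bool" where
  "cz_rep \<omega> j D K \<longleftrightarrow>
     (\<exists>Ks :: nat \<Rightarrow> int \<Rightarrow> complex.
        (\<forall>k<j. Ks k = (\<lambda>_. 0)) \<and>
        (\<forall>k\<ge>j. cz_block \<omega> (2 ^ k) D (Ks k)) \<and>
        (\<forall>x. (\<lambda>k. Ks k x) sums K x))"

definition cz_kernel_from :: "real \<Rightarrow> nat \<Rightarrow> (int \<Rightarrow> complex) \<Rightarrow> bool" where
  "cz_kernel_from \<omega> j K \<longleftrightarrow> (\<exists>D. cz_rep \<omega> j D K)"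

definition cz_norm_from :: "real \<Rightarrow> nat \<Rightarrow> (int \<Rightarrow> complex) \<Rightarrow> real" where
  "cz_norm_from \<omega> j K = Inf {D. cz_rep \<omega> j D K}"

definition conv :: "(int \<Rightarrow> complex) \<Rightarrow> (int \<Rightarrow> complex) \<Rightarrow> int \<Rightarrow> complex" where
  "conv K L x = (\<Sum>\<^sub>\<infinity>y. K y * L (x - y))"

end

theory Submission
  imports Defs
begin


definition fsupp :: "int \<Rightarrow> (int \<Rightarrow> complex) \<Rightarrow> bool" where
  "fsupp R f \<longleftrightarrow> (\<forall>x. f x \<noteq> 0 \<longrightarrow> -R \<le> x \<and> x \<le> R)"

lemma fsuppD: "fsupp R f \<Longrightarrow> x \<notin> {-R..R} \<Longrightarrow> f x = 0"
  unfolding fsupp_def by auto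

lemma fsupp_mono: "fsupp R f \<Longrightarrow> R \<le> R' \<Longrightarrow> fsupp R' f"
  unfolding fsupp_def by force

lemma infsum_window:
  fixes g :: "int \<Rightarrow> 'a::{comm_monoid_add,t2_space}"
  assumes "\<And>x. x \<notin> {-R..R} \<Longrightarrow> g x = 0"
  shows "infsum g UNIV = sum g {-R..R}"
proof -
  have "infsum g UNIV = infsum g {-R..R}" by (rule infsum_cong_neutral) (use assms in fastforce)+
  then show ?thesis by simp
qed

lemma summable_window:
  fixes g :: "int \<Rightarrow> 'a::{comm_monoid_add,topological_space}"
  assumes "\<And>x. x \<notin> {-R..R} \<Longrightarrow> g x = 0"
  shows "g summable_on UNIV"
  by (rule finite_nonzero_values_imp_summable_on, rule finite_subset[of _ "{-R..R}"]) (use assms in fastforce)+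

lemma sum_window_mono:
  fixes g :: "int \<Rightarrow> 'a::comm_monoid_add"
  assumes "\<And>x. x \<notin> {-R..R} \<Longrightarrow> g x = 0" "R \<le> R'"
  shows "sum g {-R'..R'} = sum g {-R..R}"
  by (rule sum.mono_neutral_right) (use assms in fastforce)+

definition FT :: "(int \<Rightarrow> complex) \<Rightarrow> real \<Rightarrow> complex" where
  "FT f \<xi> = (\<Sum>\<^sub>\<infinity>x. f x * cis (- (of_int x * \<xi>)))"

lemma FT_window:
  assumes "fsupp R f"
  shows "FT f \<xi> = (\<Sum>x\<in>{-R..R}. f x * cis (- (of_int x * \<xi>)))"
  unfolding FT_def by (rule infsum_window) (use fsuppD[OF assms] in auto)

lemma geom_cis:
  fixes d :: int and N :: nat
  assumes "\<bar>d\<bar> < int N"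
  shows "(\<Sum>m<N. cis (2 * pi * real m * of_int d / real N)) = (if d = 0 then of_nat N else 0)"
proof (cases "d = 0")
  case True then show ?thesis by simp
next
  case False
  have N: "N > 0" using assms by linarith
  define w where "w = cis (2 * pi * of_int d / real N)"
  have pw: "cis (2 * pi * real m * of_int d / real N) = w ^ m" for m
    unfolding w_def Complex.DeMoivre by (simp add: algebra_simps)
  have wN: "w ^ N = 1"
  proof -
    have "w ^ N = cis (2 * pi * of_int d)" unfolding w_def Complex.DeMoivre using N by simp
    also have "\<dots> = 1" by (rule cis_multiple_2pi) simp
    finally show ?thesis .
  qed
  have w1: "w \<noteq> 1"
  proof
    assume "w = 1"
    then have "cos (2 * pi * of_int d / real N) = 1" unfolding w_def
      by (metis cis.sel(1) one_complex.sel(1))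
    then obtain k :: int where k: "2 * pi * of_int d / real N = real_of_int k * 2 * pi"
      using cos_one_2pi_int by blast
    then have "real_of_int d = real_of_int k * real N" using N by (simp add: field_simps)
    then have dk: "d = k * int N" by (metis of_int_eq_iff of_int_mult of_int_of_nat_eq)
    then show False using assms False
      by (cases "k = 0") (auto simp: abs_mult dest!: mult_le_cancel_right1[THEN iffD1, rotated])
  qed
  show ?thesis using False w1 wN by (simp add: pw sum_gp_strict)
qed


lemma parseval:
  assumes "fsupp R f" "0 \<le> R"
  shows "(\<Sum>m<nat (2*R+1). (cmod (FT f (2 * pi * real m / real (nat (2*R+1)))))\<^sup>2)
          = real (nat (2*R+1)) * (\<Sum>x\<in>{-R..R}. (cmod (f x))\<^sup>2)"
proof -
  define N where "N = nat (2*R+1)"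
  define I where "I = {-R..R}"
  have fin: "finite I" unfolding I_def by simp
  have key: "complex_of_real ((cmod (FT f (2 * pi * real m / real N)))\<^sup>2)
     = (\<Sum>x\<in>I. \<Sum>y\<in>I. f x * cnj (f y) * cis (2 * pi * real m * of_int (y - x) / real N))" for m
  proof -
    define \<xi> where "\<xi> = 2 * pi * real m / real N"
    have "complex_of_real ((cmod (FT f \<xi>))\<^sup>2) = FT f \<xi> * cnj (FT f \<xi>)" by (rule complex_norm_square)
    also have "\<dots> = (\<Sum>x\<in>I. f x * cis (- (of_int x * \<xi>))) * (\<Sum>y\<in>I. cnj (f y) * cis (of_int y * \<xi>))"
      unfolding FT_window[OF assms(1)] I_def by (simp add: cis_cnj)
    also have "\<dots> = (\<Sum>x\<in>I. \<Sum>y\<in>I. f x * cis (- (of_int x * \<xi>)) * (cnj (f y) * cis (of_int y * \<xi>)))"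
      by (rule sum_product)
    also have "\<dots> = (\<Sum>x\<in>I. \<Sum>y\<in>I. f x * cnj (f y) * cis (2 * pi * real m * of_int (y - x) / real N))"
    proof (intro sum.cong refl)
      fix x y
      have "f x * cis (- (of_int x * \<xi>)) * (cnj (f y) * cis (of_int y * \<xi>))
         = f x * cnj (f y) * (cis (- (of_int x * \<xi>)) * cis (of_int y * \<xi>))" by (simp add: algebra_simps)
      also have "cis (- (of_int x * \<xi>)) * cis (of_int y * \<xi>) = cis (2 * pi * real m * of_int (y - x) / real N)"
        unfolding cis_mult \<xi>_def by (simp add: algebra_simps diff_divide_distrib)
      finally show "f x * cis (- (of_int x * \<xi>)) * (cnj (f y) * cis (of_int y * \<xi>))
         = f x * cnj (f y) * cis (2 * pi * real m * of_int (y - x) / real N)" .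
    qed
    finally show ?thesis unfolding \<xi>_def .
  qed
  have "complex_of_real (\<Sum>m<N. (cmod (FT f (2 * pi * real m / real N)))\<^sup>2)
      = (\<Sum>m<N. \<Sum>x\<in>I. \<Sum>y\<in>I. f x * cnj (f y) * cis (2 * pi * real m * of_int (y - x) / real N))"
    unfolding of_real_sum using key by (intro sum.cong refl) blast
  also have "\<dots> = (\<Sum>x\<in>I. \<Sum>y\<in>I. f x * cnj (f y) * (\<Sum>m<N. cis (2 * pi * real m * of_int (y - x) / real N)))"
    by (simp add: sum.swap[of _ "{..<N}"] sum_distrib_left)
  also have "\<dots> = (\<Sum>x\<in>I. \<Sum>y\<in>I. f x * cnj (f y) * (if y - x = 0 then of_nat N else 0))"
  proof (intro sum.cong refl)
    fix x y assume "x \<in> I" "y \<in> I"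
    then have "\<bar>y - x\<bar> < int N" unfolding I_def N_def using assms(2) by auto
    then show "f x * cnj (f y) * (\<Sum>m<N. cis (2 * pi * real m * of_int (y - x) / real N))
       = f x * cnj (f y) * (if y - x = 0 then of_nat N else 0)" using geom_cis[of "y - x" N] by presburger
  qed
  also have "\<dots> = (\<Sum>x\<in>I. f x * cnj (f x) * of_nat N)"
  proof (intro sum.cong refl)
    fix x assume x: "x \<in> I"
    have "(\<Sum>y\<in>I. f x * cnj (f y) * (if y - x = 0 then of_nat N else 0))
        = (\<Sum>y\<in>I. if y = x then f x * cnj (f y) * of_nat N else 0)"
      by (intro sum.cong refl) auto
    also have "\<dots> = f x * cnj (f x) * of_nat N" using x fin by (simp add: sum.delta')
    finally show "(\<Sum>y\<in>I. f x * cnj (f y) * (if y - x = 0 then of_nat N else 0)) = f x * cnj (f x) * of_nat N" .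
  qed
  also have "\<dots> = complex_of_real (real N * (\<Sum>x\<in>I. (cmod (f x))\<^sup>2))"
    unfolding of_real_mult of_real_sum complex_norm_square by (simp add: sum_distrib_left algebra_simps)
  finally show ?thesis unfolding N_def I_def of_real_eq_iff .
qed


lemma bij_shift_int: "bij_betw (\<lambda>z::int. z + c) UNIV UNIV"
  by (rule bij_betwI[where g="\<lambda>z. z - c"]) auto

lemma bij_refl_int: "bij_betw (\<lambda>z::int. c - z) UNIV UNIV"
  by (rule bij_betwI[where g="\<lambda>z. c - z"]) auto

lemma infsum_shift: "(\<Sum>\<^sub>\<infinity>z. F (z + c)) = (\<Sum>\<^sub>\<infinity>z::int. F z)"
  by (rule infsum_reindex_bij_betw[OF bij_shift_int])

lemma summable_shift_iff: "(\<lambda>z. F (z + c)) summable_on UNIV \<longleftrightarrow> (F :: int \<Rightarrow> 'a::real_normed_vector) summable_on UNIV"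
  using summable_on_reindex_bij_betw[OF bij_shift_int, of F c] by simp

lemma conv_comm: "conv f g = conv g f"
proof
  fix x
  have "conv f g x = (\<Sum>\<^sub>\<infinity>w. f (x - w) * g (x - (x - w)))"
    unfolding conv_def by (rule infsum_reindex_bij_betw[OF bij_refl_int, symmetric])
  also have "\<dots> = conv g f x" unfolding conv_def by (simp add: mult.commute)
  finally show "conv f g x = conv g f x" .
qed

lemma conv_shift: "conv f g (x + h) = conv f (\<lambda>z. g (z + h)) x"
  unfolding conv_def by (simp add: algebra_simps)

lemma conv_window:
  assumes "fsupp R f"
  shows "conv f g x = (\<Sum>y\<in>{-R..R}. f y * g (x - y))"
  unfolding conv_def by (rule infsum_window) (use fsuppD[OF assms] in auto)

lemma conv_fsupp:
  assumes "fsupp R1 f" "fsupp R2 g"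
  shows "fsupp (R1 + R2) (conv f g)"
  unfolding fsupp_def
proof (intro allI impI)
  fix x assume "conv f g x \<noteq> 0"
  then obtain y where "y \<in> {-R1..R1}" "f y * g (x - y) \<noteq> 0"
    unfolding conv_window[OF assms(1)] by (meson sum.neutral)
  then show "- (R1 + R2) \<le> x \<and> x \<le> R1 + R2" using assms unfolding fsupp_def by force
qed

lemma FT_shift_window:
  assumes "fsupp R g" "\<bar>y\<bar> \<le> R1" "0 \<le> R1"
  shows "(\<Sum>z\<in>{-(R1+R)..R1+R}. g (z - y) * cis (- (of_int z * \<xi>))) = cis (- (of_int y * \<xi>)) * FT g \<xi>"
proof -
  have "(\<Sum>z\<in>{-(R1+R)..R1+R}. g (z - y) * cis (- (of_int z * \<xi>)))
       = (\<Sum>\<^sub>\<infinity>z. g (z - y) * cis (- (of_int z * \<xi>)))"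
  proof (rule infsum_window[symmetric])
    fix x assume "x \<notin> {-(R1+R)..R1+R}"
    then have "x - y \<notin> {-R..R}" using assms(2) by auto
    then show "g (x - y) * cis (- (of_int x * \<xi>)) = 0" by (simp add: fsuppD[OF assms(1)])
  qed
  also have "\<dots> = (\<Sum>\<^sub>\<infinity>z. cis (- (of_int y * \<xi>)) * (g (z + (-y)) * cis (- (of_int (z + (-y)) * \<xi>))))"
    by (intro infsum_cong) (simp add: cis_mult algebra_simps)
  also have "\<dots> = cis (- (of_int y * \<xi>)) * (\<Sum>\<^sub>\<infinity>z. g (z + (-y)) * cis (- (of_int (z + (-y)) * \<xi>)))"
    by (rule infsum_cmult_right') 
  also have "(\<Sum>\<^sub>\<infinity>z. g (z + (-y)) * cis (- (of_int (z + (-y)) * \<xi>))) = FT g \<xi>"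
    unfolding FT_def by (rule infsum_shift[where F="\<lambda>w. g w * cis (- (of_int w * \<xi>))"])
  finally show ?thesis .
qed

lemma FT_conv:
  assumes "fsupp R1 f" "fsupp R2 g" "0 \<le> R1" "0 \<le> R2"
  shows "FT (conv f g) \<xi> = FT f \<xi> * FT g \<xi>"
proof -
  have "FT (conv f g) \<xi> = (\<Sum>z\<in>{-(R1+R2)..R1+R2}. conv f g z * cis (- (of_int z * \<xi>)))"
    by (rule FT_window[OF conv_fsupp[OF assms(1,2)]])
  also have "\<dots> = (\<Sum>z\<in>{-(R1+R2)..R1+R2}. \<Sum>y\<in>{-R1..R1}. f y * (g (z - y) * cis (- (of_int z * \<xi>))))"
    unfolding conv_window[OF assms(1)] by (simp add: sum_distrib_right mult.assoc)
  also have "\<dots> = (\<Sum>y\<in>{-R1..R1}. f y * (\<Sum>z\<in>{-(R1+R2)..R1+R2}. g (z - y) * cis (- (of_int z * \<xi>))))"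
    by (subst sum.swap) (simp add: sum_distrib_left)
  also have "\<dots> = (\<Sum>y\<in>{-R1..R1}. f y * (cis (- (of_int y * \<xi>)) * FT g \<xi>))"
    by (intro sum.cong refl arg_cong2[where f="(*)"] FT_shift_window[OF assms(2)]) (use assms in auto)
  also have "\<dots> = FT f \<xi> * FT g \<xi>"
    unfolding FT_window[OF assms(1)] by (simp add: sum_distrib_right mult.assoc)
  finally show ?thesis .
qed

lemma FT_zero: "FT f 0 = (\<Sum>\<^sub>\<infinity>x. f x)"
  unfolding FT_def by simp

lemma conv_L2_bound:
  assumes "fsupp Rf f" "fsupp Rg g" "0 \<le> Rf" "0 \<le> Rg" "\<And>\<xi>. cmod (FT f \<xi>) \<le> B"
  shows "(\<Sum>\<^sub>\<infinity>x. (cmod (conv f g x))\<^sup>2) \<le> B\<^sup>2 * (\<Sum>\<^sub>\<infinity>x. (cmod (g x))\<^sup>2)"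
proof -
  define R where "R = Rf + Rg"
  define N where "N = nat (2*R+1)"
  have R0: "0 \<le> R" unfolding R_def using assms by simp
  have N0: "real N > 0" unfolding N_def using R0 by simp
  have sc: "fsupp R (conv f g)" unfolding R_def by (rule conv_fsupp[OF assms(1,2)])
  have sg: "fsupp R g" by (rule fsupp_mono[OF assms(2)]) (use assms in \<open>simp add: R_def\<close>)
  have e1: "(\<Sum>\<^sub>\<infinity>x. (cmod (conv f g x))\<^sup>2) = (\<Sum>x\<in>{-R..R}. (cmod (conv f g x))\<^sup>2)"
    by (rule infsum_window) (use fsuppD[OF sc] in auto)
  have e2: "(\<Sum>\<^sub>\<infinity>x. (cmod (g x))\<^sup>2) = (\<Sum>x\<in>{-R..R}. (cmod (g x))\<^sup>2)"
    by (rule infsum_window) (use fsuppD[OF sg] in auto)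
  have B0: "0 \<le> B" using assms(5)[of 0] norm_ge_zero order_trans by blast
  have "real N * (\<Sum>x\<in>{-R..R}. (cmod (conv f g x))\<^sup>2)
        = (\<Sum>m<N. (cmod (FT (conv f g) (2 * pi * real m / real N)))\<^sup>2)"
    unfolding N_def by (rule parseval[OF sc R0, symmetric])
  also have "\<dots> = (\<Sum>m<N. (cmod (FT f (2 * pi * real m / real N)))\<^sup>2 * (cmod (FT g (2 * pi * real m / real N)))\<^sup>2)"
    by (simp add: FT_conv[OF assms(1-4)] norm_mult power_mult_distrib)
  also have "\<dots> \<le> (\<Sum>m<N. B\<^sup>2 * (cmod (FT g (2 * pi * real m / real N)))\<^sup>2)"
    by (intro sum_mono mult_right_mono power_mono assms(5)) auto
  also have "\<dots> = B\<^sup>2 * (\<Sum>m<N. (cmod (FT g (2 * pi * real m / real N)))\<^sup>2)"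
    by (simp add: sum_distrib_left)
  also have "\<dots> = B\<^sup>2 * (real N * (\<Sum>x\<in>{-R..R}. (cmod (g x))\<^sup>2))"
    unfolding N_def by (simp only: parseval[OF sg R0])
  finally have "real N * (\<Sum>x\<in>{-R..R}. (cmod (conv f g x))\<^sup>2) \<le> real N * (B\<^sup>2 * (\<Sum>x\<in>{-R..R}. (cmod (g x))\<^sup>2))"
    by (simp add: algebra_simps)
  then show ?thesis unfolding e1 e2 using N0 by simp
qed


lemma cis_minus_1_sq: "(cmod (cis t - 1))\<^sup>2 = 2 - 2 * cos t"
proof -
  have "(cmod (cis t - 1))\<^sup>2 = (cos t - 1)\<^sup>2 + (sin t)\<^sup>2" by (simp add: cmod_power2)
  also have "\<dots> = 2 - 2 * cos t" using sin_cos_squared_add[of t] by (simp add: power2_eq_square algebra_simps)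
  finally show ?thesis .
qed

lemma cis_minus_1_le: "cmod (cis t - 1) \<le> \<bar>t\<bar>"
proof -
  have "(cmod (cis t - 1))\<^sup>2 = 4 * (sin (t/2))\<^sup>2"
    unfolding cis_minus_1_sq using cos_double_sin[of "t/2"] by simp
  also have "\<dots> \<le> 4 * (t/2)\<^sup>2"
    using abs_sin_x_le_abs_x[of "t/2"] abs_le_square_iff[of "sin (t/2)" "t/2"] by simp
  also have "\<dots> = \<bar>t\<bar>\<^sup>2" by (simp add: power2_eq_square)
  finally show ?thesis by (metis abs_norm_cancel abs_le_square_iff power2_abs)
qed

lemma cis_minus_1_ge:
  assumes "pi/2 \<le> \<bar>t\<bar>" "\<bar>t\<bar> \<le> pi"
  shows "1 \<le> cmod (cis t - 1)"
proof -
  have "cos \<bar>t\<bar> \<le> 0"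
  proof -
    have "0 \<le> cos (pi - \<bar>t\<bar>)" by (rule cos_ge_zero) (use assms in auto)
    then show ?thesis by simp
  qed
  then have "cos t \<le> 0" by (cases "t \<ge> 0") auto
  then have "1 \<le> (cmod (cis t - 1))\<^sup>2" unfolding cis_minus_1_sq by simp
  then show ?thesis by (metis abs_norm_cancel abs_le_square_iff one_power2 abs_one)
qed

lemma l1_le_l2:
  fixes f :: "'a \<Rightarrow> real"
  assumes "finite I" "(\<Sum>x\<in>I. (f x)\<^sup>2) \<le> A"
  shows "(\<Sum>x\<in>I. \<bar>f x\<bar>) \<le> sqrt (real (card I) * A)"
proof -
  have "(\<Sum>x\<in>I. \<bar>f x\<bar> * \<bar>1\<bar>) \<le> L2_set f I * L2_set (\<lambda>_. 1::real) I" by (rule L2_set_mult_ineq)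
  also have "\<dots> = sqrt (\<Sum>x\<in>I. (f x)\<^sup>2) * sqrt (real (card I))" unfolding L2_set_def by simp
  also have "\<dots> \<le> sqrt A * sqrt (real (card I))"
    by (intro mult_right_mono real_sqrt_le_mono assms) auto
  finally show ?thesis by (simp add: real_sqrt_mult mult.commute)
qed

lemma FT_periodic: "FT f (\<xi> + 2 * pi * of_int n) = FT f \<xi>"
  unfolding FT_def
proof (intro infsum_cong)
  fix x :: int
  have "cis (- (of_int x * (\<xi> + 2 * pi * of_int n))) = cis (- (of_int x * \<xi>)) * cis (2 * pi * (- of_int (x * n)))"
    unfolding cis_mult by (simp add: algebra_simps)
  also have "cis (2 * pi * (- of_int (x * n))) = 1" by (rule cis_multiple_2pi) simp
  finally show "f x * cis (- (of_int x * (\<xi> + 2 * pi * of_int n))) = f x * cis (- (of_int x * \<xi>))" by simp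
qed

lemma reduce_angle: "\<exists>\<theta> n. \<xi> = \<theta> + 2 * pi * of_int n \<and> -pi \<le> \<theta> \<and> \<theta> \<le> pi"
proof -
  define n where "n = \<lfloor>\<xi> / (2*pi) + 1/2\<rfloor>"
  have a: "real_of_int n \<le> \<xi> / (2*pi) + 1/2" "\<xi> / (2*pi) + 1/2 < real_of_int n + 1"
    unfolding n_def by linarith+
  have b: "\<xi> / (2*pi) = \<xi> * (1 / (2*pi))" by simp
  have "2 * pi * of_int n \<le> \<xi> + pi" "\<xi> + pi < 2 * pi * of_int n + 2 * pi"
    using a pi_gt_zero by (simp_all add: field_simps)
  then show ?thesis by (intro exI[of _ "\<xi> - 2 * pi * of_int n"] exI[of _ n]) auto
qed

locale blk =
  fixes \<omega> :: real and s :: int and D :: real and K :: "int \<Rightarrow> complex"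
  assumes blk: "cz_block \<omega> s D K" and s0: "s > 0" and om: "\<omega> > 0"
begin

lemma D0: "D > 0" using blk unfolding cz_block_def by auto

lemma supp: "fsupp s K" using blk unfolding cz_block_def fsupp_def by auto

lemma mean0: "FT K 0 = 0" using blk unfolding cz_block_def FT_zero by auto

lemma l2: "(\<Sum>\<^sub>\<infinity>x. (cmod (K x))\<^sup>2) \<le> D\<^sup>2 / real_of_int s" using blk unfolding cz_block_def by auto

lemma reg: "(\<Sum>\<^sub>\<infinity>x. (cmod (K (x + h) - K x))\<^sup>2) \<le> D\<^sup>2 / real_of_int s * (real_of_int \<bar>h\<bar> / real_of_int s) powr \<omega>"
  using blk unfolding cz_block_def by auto

lemma l2_window: "(\<Sum>x\<in>{-s..s}. (cmod (K x))\<^sup>2) \<le> D\<^sup>2 / real_of_int s"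
  using l2 infsum_window[of s "\<lambda>x. (cmod (K x))\<^sup>2"] fsuppD[OF supp] by auto

lemma l1: "(\<Sum>x\<in>{-s..s}. cmod (K x)) \<le> sqrt 3 * D"
proof -
  have "(\<Sum>x\<in>{-s..s}. \<bar>cmod (K x)\<bar>) \<le> sqrt (real (card {-s..s}) * (D\<^sup>2 / real_of_int s))"
    by (rule l1_le_l2) (use l2_window in auto)
  also have "\<dots> \<le> sqrt ((3 * real_of_int s) * (D\<^sup>2 / real_of_int s))"
    by (intro real_sqrt_le_mono mult_right_mono) (use s0 in auto)
  also have "\<dots> = sqrt 3 * D" using s0 D0 by (simp add: real_sqrt_mult)
  finally show ?thesis by simp
qed

lemma FT_small: "cmod (FT K \<theta>) \<le> sqrt 3 * D * (real_of_int s * \<bar>\<theta>\<bar>)"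
proof -
  have "FT K \<theta> = FT K \<theta> - FT K 0" using mean0 by simp
  also have "\<dots> = (\<Sum>x\<in>{-s..s}. K x * (cis (- (of_int x * \<theta>)) - 1))"
    unfolding FT_window[OF supp] by (simp add: sum_subtractf algebra_simps)
  finally have e: "FT K \<theta> = \<dots>" .
  have "cmod (FT K \<theta>) \<le> (\<Sum>x\<in>{-s..s}. cmod (K x) * (real_of_int s * \<bar>\<theta>\<bar>))"
    unfolding e
  proof (rule order_trans[OF norm_sum sum_mono])
    fix x assume x: "x \<in> {-s..s}"
    have "cmod (cis (- (of_int x * \<theta>)) - 1) \<le> \<bar>of_int x * \<theta>\<bar>" using cis_minus_1_le[of "- (of_int x * \<theta>)"] by simp
    also have "\<dots> \<le> real_of_int s * \<bar>\<theta>\<bar>" using x by (auto simp: abs_mult intro!: mult_right_mono)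
    finally show "cmod (K x * (cis (- (of_int x * \<theta>)) - 1)) \<le> cmod (K x) * (real_of_int s * \<bar>\<theta>\<bar>)"
      by (simp add: norm_mult mult_left_mono)
  qed
  also have "\<dots> = (\<Sum>x\<in>{-s..s}. cmod (K x)) * (real_of_int s * \<bar>\<theta>\<bar>)" by (simp add: sum_distrib_right)
  also have "\<dots> \<le> sqrt 3 * D * (real_of_int s * \<bar>\<theta>\<bar>)"
    by (rule mult_right_mono[OF l1]) (use s0 in auto)
  finally show ?thesis .
qed

lemma FT_large:
  assumes th: "0 < \<bar>\<theta>\<bar>" "\<bar>\<theta>\<bar> \<le> pi" and big: "1 \<le> real_of_int s * \<bar>\<theta>\<bar>"
  shows "cmod (FT K \<theta>) \<le> sqrt 11 * D * sqrt ((pi / (real_of_int s * \<bar>\<theta>\<bar>)) powr \<omega>)"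
proof -
  define h where "h = \<lfloor>pi / \<bar>\<theta>\<bar>\<rfloor>"
  have q1: "1 \<le> pi / \<bar>\<theta>\<bar>" using th by (simp add: field_simps)
  have h1: "real_of_int h \<le> pi / \<bar>\<theta>\<bar>" "pi / \<bar>\<theta>\<bar> < real_of_int h + 1" unfolding h_def by linarith+
  have hpos: "1 \<le> h" unfolding h_def using q1 by linarith
  have hth1: "real_of_int h * \<bar>\<theta>\<bar> \<le> pi" using h1(1) th by (simp add: field_simps)
  have hth2: "pi < real_of_int h * \<bar>\<theta>\<bar> + \<bar>\<theta>\<bar>" using h1(2) th by (simp add: field_simps)
  have hth3: "\<bar>\<theta>\<bar> \<le> real_of_int h * \<bar>\<theta>\<bar>" using hpos th by simp
  have ht: "\<bar>of_int h * \<theta>\<bar> = real_of_int h * \<bar>\<theta>\<bar>" using hpos by (simp add: abs_mult)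
  have cge: "1 \<le> cmod (cis (of_int h * \<theta>) - 1)"
    by (rule cis_minus_1_ge) (use hth1 hth2 hth3 ht in linarith)+
  define W where "W = {-(h+s)..h+s}"
  define A where "A = D\<^sup>2 / real_of_int s * (real_of_int h / real_of_int s) powr \<omega>"
  have e1: "(\<Sum>x\<in>W. K (x - (-h)) * cis (- (of_int x * \<theta>))) = cis (- (of_int (-h) * \<theta>)) * FT K \<theta>"
    unfolding W_def by (rule FT_shift_window[OF supp]) (use hpos in auto)
  have e2: "(\<Sum>x\<in>W. K x * cis (- (of_int x * \<theta>))) = FT K \<theta>"
    unfolding W_def by (rule FT_window[symmetric], rule fsupp_mono[OF supp]) (use hpos in auto)
  have e: "(\<Sum>x\<in>W. (K (x + h) - K x) * cis (- (of_int x * \<theta>))) = (cis (of_int h * \<theta>) - 1) * FT K \<theta>"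
    using e1 e2 by (simp add: sum_subtractf algebra_simps)
  have Wsupp: "x \<notin> W \<Longrightarrow> K (x + h) - K x = 0" for x
    using fsuppD[OF supp, of x] fsuppD[OF supp, of "x+h"] hpos unfolding W_def by auto
  have sq: "(\<Sum>x\<in>W. (cmod (K (x + h) - K x))\<^sup>2) \<le> A"
  proof -
    have "(\<Sum>x\<in>W. (cmod (K (x + h) - K x))\<^sup>2) = (\<Sum>\<^sub>\<infinity>x. (cmod (K (x + h) - K x))\<^sup>2)"
      unfolding W_def by (rule infsum_window[symmetric]) (use Wsupp[unfolded W_def] in auto)
    also have "\<dots> \<le> A" unfolding A_def using reg[of h] hpos by simp
    finally show ?thesis .
  qed
  have "cmod (FT K \<theta>) \<le> cmod (cis (of_int h * \<theta>) - 1) * cmod (FT K \<theta>)"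
    using cge by (simp add: mult_le_cancel_right1)
  also have "\<dots> = cmod (\<Sum>x\<in>W. (K (x + h) - K x) * cis (- (of_int x * \<theta>)))"
    unfolding e norm_mult ..
  also have "\<dots> \<le> (\<Sum>x\<in>W. \<bar>cmod (K (x + h) - K x)\<bar>)"
    by (rule order_trans[OF norm_sum]) (simp add: norm_mult)
  also have "\<dots> \<le> sqrt (real (card W) * A)" by (rule l1_le_l2) (use sq W_def in auto)
  also have "\<dots> \<le> sqrt ((11 * real_of_int s) * A)"
  proof -
    have "real_of_int h \<le> pi * real_of_int s"
    proof -
      have "pi / \<bar>\<theta>\<bar> \<le> pi * real_of_int s" using big th by (simp add: field_simps)
      then show ?thesis using h1 by linarith
    qed
    moreover have "pi * real_of_int s \<le> 4 * real_of_int s" using pi_less_4 s0 by (intro mult_right_mono) auto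
    ultimately have "real_of_int h \<le> 4 * real_of_int s" by linarith
    moreover have "1 \<le> real_of_int s" using s0 by simp
    moreover have "real (card W) = 2*real_of_int h + 2*real_of_int s + 1" unfolding W_def using hpos s0 by simp
    ultimately have "real (card W) \<le> 11 * real_of_int s" by linarith
    moreover have "0 \<le> A" unfolding A_def using s0 by simp
    ultimately show ?thesis by (intro real_sqrt_le_mono mult_right_mono) auto
  qed
  also have "\<dots> = sqrt 11 * D * sqrt ((real_of_int h / real_of_int s) powr \<omega>)"
    unfolding A_def using s0 D0 by (simp add: real_sqrt_mult)
  also have "\<dots> \<le> sqrt 11 * D * sqrt ((pi / (real_of_int s * \<bar>\<theta>\<bar>)) powr \<omega>)"
  proof -
    have "real_of_int h / real_of_int s \<le> pi / (real_of_int s * \<bar>\<theta>\<bar>)"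
      using h1(1) s0 th by (simp add: field_simps)
    then have "(real_of_int h / real_of_int s) powr \<omega> \<le> (pi / (real_of_int s * \<bar>\<theta>\<bar>)) powr \<omega>"
      using om hpos s0 by (intro powr_mono2) auto
    then show ?thesis using D0 by (intro mult_left_mono real_sqrt_le_mono) auto
  qed
  finally show ?thesis .
qed

end


definition gfun :: "real \<Rightarrow> real \<Rightarrow> real" where
  "gfun \<delta> a = (if a \<le> 1 then a powr \<delta> else a powr (-\<delta>))"

lemma sqrt_powr: "0 \<le> y \<Longrightarrow> sqrt (y powr \<omega>) = y powr (\<omega>/2)"
  by (simp add: powr_half_sqrt[symmetric] powr_powr)

context blk begin

lemma FT_reduced:
  assumes "\<bar>\<theta>\<bar> \<le> pi"
  shows "cmod (FT K \<theta>) \<le> (sqrt 11 * pi powr (\<omega>/2)) * D * gfun (min 1 (\<omega>/2)) (real_of_int s * \<bar>\<theta>\<bar>)"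
proof -
  define a where "a = real_of_int s * \<bar>\<theta>\<bar>"
  define \<delta> where "\<delta> = min 1 (\<omega>/2)"
  have a0: "0 \<le> a" unfolding a_def using s0 by simp
  have pw1: "1 \<le> pi powr (\<omega>/2)" using om pi_gt3 by (intro ge_one_powr_ge_zero) auto
  show ?thesis
  proof (cases "a \<le> 1")
    case True
    have "cmod (FT K \<theta>) \<le> sqrt 3 * D * a" using FT_small unfolding a_def .
    also have "\<dots> \<le> (sqrt 11 * pi powr (\<omega>/2)) * D * a powr \<delta>"
    proof (rule mult_mono)
      show "sqrt 3 * D \<le> sqrt 11 * pi powr (\<omega>/2) * D"
        using pw1 D0 by (intro mult_right_mono) (auto intro: order_trans[of _ "sqrt 11"])
      show "a \<le> a powr \<delta>"
      proof (cases "a = 0")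
        case False
        then have "a powr 1 \<le> a powr \<delta>" using a0 True om unfolding \<delta>_def by (intro powr_mono') auto
        then show ?thesis using False a0 by simp
      qed simp
    qed (use D0 pw1 a0 in auto)
    finally show ?thesis unfolding a_def[symmetric] \<delta>_def[symmetric] gfun_def using True by simp
  next
    case False
    then have th0: "0 < \<bar>\<theta>\<bar>" unfolding a_def by (cases "\<theta> = 0") auto
    have "cmod (FT K \<theta>) \<le> sqrt 11 * D * sqrt ((pi / a) powr \<omega>)"
      using FT_large[OF th0 assms] False unfolding a_def by simp
    also have "sqrt ((pi / a) powr \<omega>) = pi powr (\<omega>/2) * a powr (-(\<omega>/2))"
    proof -
      have "sqrt ((pi / a) powr \<omega>) = (pi/a) powr (\<omega>/2)" using False by (intro sqrt_powr) simp
      also have "\<dots> = pi powr (\<omega>/2) * a powr (-(\<omega>/2))" using False by (simp add: powr_divide powr_minus_divide)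
      finally show ?thesis .
    qed
    also have "a powr (-(\<omega>/2)) \<le> a powr (-\<delta>)"
      using False unfolding \<delta>_def by (intro powr_mono) auto
    finally have "cmod (FT K \<theta>) \<le> sqrt 11 * D * (pi powr (\<omega>/2) * a powr (-\<delta>))"
      using D0 by (simp add: mult_left_mono)
    then show ?thesis unfolding a_def[symmetric] \<delta>_def[symmetric] gfun_def using False by (simp add: algebra_simps)
  qed
qed

end

lemma geom_inj_bound:
  fixes f :: "nat \<Rightarrow> real" and q :: real
  assumes "finite A" "inj_on \<phi> A" "\<And>k. k \<in> A \<Longrightarrow> f k \<le> q ^ (\<phi> k)" "0 \<le> q" "q < 1"
  shows "sum f A \<le> 1 / (1 - q)"
proof -
  have "sum f A \<le> (\<Sum>k\<in>A. q ^ (\<phi> k))" by (rule sum_mono) (use assms in auto)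
  also have "\<dots> = (\<Sum>i\<in>\<phi> ` A. q ^ i)" using sum.reindex[OF assms(2), of "\<lambda>i. q ^ i"] by simp
  also have "\<dots> \<le> (\<Sum>i<Suc (Max (\<phi> ` A)). q ^ i)"
    by (rule sum_mono2) (use assms(1,4) in \<open>auto simp: less_Suc_eq_le\<close>)
  also have "\<dots> = (1 - q ^ Suc (Max (\<phi> ` A))) / (1 - q)" unfolding sum_gp_strict using assms by simp
  also have "\<dots> \<le> 1 / (1 - q)" using assms by (intro divide_right_mono) auto
  finally show ?thesis .
qed

lemma two_pow_powr: "((2::real) ^ n) powr \<delta> = (2 powr \<delta>) ^ n"
proof -
  have "((2::real)^n) powr \<delta> = (2 powr real n) powr \<delta>" by (simp add: powr_realpow)
  also have "\<dots> = (2 powr \<delta>) powr real n" by (simp add: powr_powr mult.commute)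
  also have "\<dots> = (2 powr \<delta>)^n" by (simp add: powr_realpow)
  finally show ?thesis .
qed

lemma gfun_sum:
  assumes "0 < \<delta>" "0 < t" "finite A"
  shows "(\<Sum>k\<in>A. gfun \<delta> (2 ^ k * t)) \<le> 2 / (1 - 2 powr (-\<delta>))"
proof -
  define q where "q = (2::real) powr (-\<delta>)"
  have q0: "0 \<le> q" "q < 1" unfolding q_def using assms powr_less_mono[of "-\<delta>" 0 "2::real"] by auto
  define A1 where "A1 = {k\<in>A. 2 ^ k * t \<le> 1}"
  define A2 where "A2 = {k\<in>A. \<not> 2 ^ k * t \<le> 1}"
  have split: "(\<Sum>k\<in>A. gfun \<delta> (2 ^ k * t)) = (\<Sum>k\<in>A1. gfun \<delta> (2 ^ k * t)) + (\<Sum>k\<in>A2. gfun \<delta> (2 ^ k * t))"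
  proof -
    have "A = A1 \<union> A2" "A1 \<inter> A2 = {}" unfolding A1_def A2_def by auto
    then show ?thesis using assms(3) by (simp add: sum.union_disjoint)
  qed
  have fin: "finite A1" "finite A2" unfolding A1_def A2_def using assms by auto
  have b1: "(\<Sum>k\<in>A1. gfun \<delta> (2 ^ k * t)) \<le> 1 / (1 - q)"
  proof (cases "A1 = {}")
    case False
    define M where "M = Max A1"
    have M: "k \<in> A1 \<Longrightarrow> k \<le> M" for k unfolding M_def using fin by simp
    have MA: "M \<in> A1" unfolding M_def using fin False by simp
    show ?thesis
    proof (rule geom_inj_bound[OF fin(1), of "\<lambda>k. M - k"])
      show "inj_on (\<lambda>k. M - k) A1"
      proof (rule inj_onI)
        fix x y assume "x \<in> A1" "y \<in> A1" "M - x = M - y"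
        then show "x = y" using M[of x] M[of y] by linarith
      qed
      fix k assume k: "k \<in> A1"
      have e: "2 ^ k * t = (2 ^ M * t) / 2 ^ (M - k)" using M[OF k] by (simp add: power_diff)
      have "gfun \<delta> (2 ^ k * t) = (2 ^ k * t) powr \<delta>" using k unfolding gfun_def A1_def by simp
      also have "\<dots> = (2 ^ M * t) powr \<delta> / (2 ^ (M - k)) powr \<delta>"
        using assms unfolding e by (simp add: powr_divide)
      also have "\<dots> \<le> 1 / (2 ^ (M - k)) powr \<delta>"
        using MA assms unfolding A1_def by (intro divide_right_mono) (auto intro: powr_le1)
      also have "\<dots> = q ^ (M - k)" unfolding q_def two_pow_powr by (simp add: powr_minus_divide power_one_over)
      finally show "gfun \<delta> (2 ^ k * t) \<le> q ^ (M - k)" .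
    qed (use q0 in auto)
  qed (use q0 in simp)
  have b2: "(\<Sum>k\<in>A2. gfun \<delta> (2 ^ k * t)) \<le> 1 / (1 - q)"
  proof (cases "A2 = {}")
    case False
    define m where "m = Min A2"
    have m: "k \<in> A2 \<Longrightarrow> m \<le> k" for k unfolding m_def using fin by simp
    have mA: "m \<in> A2" unfolding m_def using fin False by simp
    show ?thesis
    proof (rule geom_inj_bound[OF fin(2), of "\<lambda>k. k - m"])
      show "inj_on (\<lambda>k. k - m) A2"
      proof (rule inj_onI)
        fix x y assume "x \<in> A2" "y \<in> A2" "x - m = y - m"
        then show "x = y" using m[of x] m[of y] by linarith
      qed
      fix k assume k: "k \<in> A2"
      have e: "2 ^ k * t = (2 ^ m * t) * 2 ^ (k - m)" using m[OF k] by (simp add: power_add[symmetric])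
      have "gfun \<delta> (2 ^ k * t) = (2 ^ k * t) powr (-\<delta>)" using k unfolding gfun_def A2_def by simp
      also have "\<dots> = (2 ^ m * t) powr (-\<delta>) * (2 ^ (k - m)) powr (-\<delta>)"
        using assms unfolding e by (simp add: powr_mult)
      also have "\<dots> \<le> 1 * (2 ^ (k - m)) powr (-\<delta>)"
      proof (rule mult_right_mono)
        have "1 < 2 ^ m * t" using mA unfolding A2_def by simp
        then have "1 \<le> (2 ^ m * t) powr \<delta>" using assms by (intro ge_one_powr_ge_zero) auto
        then show "(2 ^ m * t) powr (-\<delta>) \<le> 1" unfolding powr_minus_divide by (simp add: divide_le_eq_1)
      qed simp
      also have "\<dots> = q ^ (k - m)" unfolding q_def two_pow_powr[symmetric] by (simp add: powr_powr powr_realpow[symmetric] mult.commute)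
      finally show "gfun \<delta> (2 ^ k * t) \<le> q ^ (k - m)" .
    qed (use q0 in auto)
  qed (use q0 in simp)
  show ?thesis using split b1 b2 unfolding q_def by simp
qed


definition CF :: "real \<Rightarrow> real" where
  "CF \<omega> = (sqrt 11 * pi powr (\<omega>/2)) * (2 / (1 - 2 powr (- min 1 (\<omega>/2))))"

lemma CF_pos: "\<omega> > 0 \<Longrightarrow> CF \<omega> > 0"
proof -
  assume "\<omega> > 0"
  then have "2 powr (- min 1 (\<omega>/2)) < 2 powr 0" by (intro powr_less_mono) auto
  then show ?thesis unfolding CF_def by simp
qed

lemma fsupp_sum:
  assumes "finite A" "\<And>k. k \<in> A \<Longrightarrow> fsupp R (F k)"
  shows "fsupp R (\<lambda>x. \<Sum>k\<in>A. F k x)"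
  unfolding fsupp_def
proof (intro allI impI)
  fix x assume "(\<Sum>k\<in>A. F k x) \<noteq> 0"
  then obtain k where "k \<in> A" "F k x \<noteq> 0" by (meson sum.neutral)
  then show "- R \<le> x \<and> x \<le> R" using assms(2) unfolding fsupp_def by blast
qed

lemma FT_sum:
  assumes "finite A" "\<And>k. k \<in> A \<Longrightarrow> fsupp R (F k)"
  shows "FT (\<lambda>x. \<Sum>k\<in>A. F k x) \<xi> = (\<Sum>k\<in>A. FT (F k) \<xi>)"
proof -
  have "FT (\<lambda>x. \<Sum>k\<in>A. F k x) \<xi> = (\<Sum>x\<in>{-R..R}. (\<Sum>k\<in>A. F k x) * cis (- (of_int x * \<xi>)))"
    by (rule FT_window[OF fsupp_sum[OF assms]])
  also have "\<dots> = (\<Sum>k\<in>A. \<Sum>x\<in>{-R..R}. F k x * cis (- (of_int x * \<xi>)))"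
    by (simp add: sum_distrib_right sum.swap[of _ A])
  also have "\<dots> = (\<Sum>k\<in>A. FT (F k) \<xi>)"
    by (intro sum.cong refl FT_window[symmetric] assms(2)) 
  finally show ?thesis .
qed

lemma conv_sums:
  assumes "finite A" "finite B" "\<And>k. k \<in> A \<Longrightarrow> fsupp R (F k)"
  shows "conv (\<lambda>x. \<Sum>k\<in>A. F k x) (\<lambda>x. \<Sum>l\<in>B. G l x) x = (\<Sum>k\<in>A. \<Sum>l\<in>B. conv (F k) (G l) x)"
proof -
  have "conv (\<lambda>x. \<Sum>k\<in>A. F k x) (\<lambda>x. \<Sum>l\<in>B. G l x) x = (\<Sum>y\<in>{-R..R}. (\<Sum>k\<in>A. F k y) * (\<Sum>l\<in>B. G l (x - y)))"
    by (rule conv_window[OF fsupp_sum[OF assms(1,3)]])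
  also have "\<dots> = (\<Sum>k\<in>A. \<Sum>l\<in>B. \<Sum>y\<in>{-R..R}. F k y * G l (x - y))"
    by (simp add: sum_product sum.swap[of _ "{-R..R}"])
  also have "\<dots> = (\<Sum>k\<in>A. \<Sum>l\<in>B. conv (F k) (G l) x)"
    by (intro sum.cong refl conv_window[symmetric] assms(3)) 
  finally show ?thesis .
qed

lemma blocks_FT_bound:
  assumes om: "\<omega> > 0" and bl: "\<And>k. cz_block \<omega> (2 ^ k) D (Ks k)" and fin: "finite A" and D0: "D > 0"
  shows "cmod (FT (\<lambda>x. \<Sum>k\<in>A. Ks k x) \<xi>) \<le> CF \<omega> * D"
proof -
  define R :: int where "R = (\<Sum>k\<in>A. 2 ^ k)"
  have bk: "blk \<omega> (2 ^ k) D (Ks k)" for k using bl om by unfold_locales auto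
  have sk: "k \<in> A \<Longrightarrow> fsupp R (Ks k)" for k
    by (rule fsupp_mono[OF blk.supp[OF bk]]) (unfold R_def, rule member_le_sum, use fin in auto)
  obtain \<theta> n where th: "\<xi> = \<theta> + 2 * pi * of_int n" "-pi \<le> \<theta>" "\<theta> \<le> pi" using reduce_angle by blast
  have "cmod (FT (\<lambda>x. \<Sum>k\<in>A. Ks k x) \<xi>) = cmod (\<Sum>k\<in>A. FT (Ks k) \<theta>)"
    using FT_sum[OF fin sk, where \<xi>="\<theta> + 2 * pi * of_int n"] unfolding th(1) FT_periodic by simp
  also have "\<dots> \<le> (\<Sum>k\<in>A. cmod (FT (Ks k) \<theta>))" by (rule norm_sum)
  also have "\<dots> \<le> CF \<omega> * D"
  proof (cases "\<theta> = 0")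
    case True
    then show ?thesis using blk.mean0[OF bk] CF_pos[OF om] D0 by simp
  next
    case False
    define \<delta> where "\<delta> = min 1 (\<omega>/2)"
    have "(\<Sum>k\<in>A. cmod (FT (Ks k) \<theta>)) \<le> (\<Sum>k\<in>A. (sqrt 11 * pi powr (\<omega>/2)) * D * gfun \<delta> (2 ^ k * \<bar>\<theta>\<bar>))"
      by (intro sum_mono) (use blk.FT_reduced[OF bk] th in \<open>auto simp: \<delta>_def\<close>)
    also have "\<dots> = (sqrt 11 * pi powr (\<omega>/2)) * D * (\<Sum>k\<in>A. gfun \<delta> (2 ^ k * \<bar>\<theta>\<bar>))"
      by (simp add: sum_distrib_left)
    also have "\<dots> \<le> (sqrt 11 * pi powr (\<omega>/2)) * D * (2 / (1 - 2 powr (-\<delta>)))"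
      by (intro mult_left_mono gfun_sum) (use False om fin D0 in \<open>auto simp: \<delta>_def\<close>)
    also have "\<dots> = CF \<omega> * D" unfolding CF_def \<delta>_def by simp
    finally show ?thesis .
  qed
  finally show ?thesis .
qed


lemma sq_add_le: "(cmod (a + b))\<^sup>2 \<le> 2 * (cmod a)\<^sup>2 + 2 * (cmod b)\<^sup>2"
proof -
  have "cmod (a + b) \<le> cmod a + cmod b" by (rule norm_triangle_ineq)
  then have "(cmod (a + b))\<^sup>2 \<le> (cmod a + cmod b)\<^sup>2" by (simp add: power_mono)
  also have "\<dots> \<le> 2 * (cmod a)\<^sup>2 + 2 * (cmod b)\<^sup>2"
    using sum_squares_ge_zero[of "cmod a - cmod b" 0] by (simp add: power2_eq_square algebra_simps)
  finally show ?thesis .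
qed

lemma infsum_sq_add:
  assumes "fsupp R f" "fsupp R g"
  shows "(\<Sum>\<^sub>\<infinity>x. (cmod (f x + g x))\<^sup>2) \<le> 2 * (\<Sum>\<^sub>\<infinity>x. (cmod (f x))\<^sup>2) + 2 * (\<Sum>\<^sub>\<infinity>x. (cmod (g x))\<^sup>2)"
proof -
  have e1: "(\<Sum>\<^sub>\<infinity>x. (cmod (f x + g x))\<^sup>2) = (\<Sum>x\<in>{-R..R}. (cmod (f x + g x))\<^sup>2)"
    by (rule infsum_window) (use fsuppD[OF assms(1)] fsuppD[OF assms(2)] in auto)
  have e2: "(\<Sum>\<^sub>\<infinity>x. (cmod (f x))\<^sup>2) = (\<Sum>x\<in>{-R..R}. (cmod (f x))\<^sup>2)"
    by (rule infsum_window) (use fsuppD[OF assms(1)] in auto)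
  have e3: "(\<Sum>\<^sub>\<infinity>x. (cmod (g x))\<^sup>2) = (\<Sum>x\<in>{-R..R}. (cmod (g x))\<^sup>2)"
    by (rule infsum_window) (use fsuppD[OF assms(2)] in auto)
  show ?thesis unfolding e1 e2 e3 sum_distrib_left sum.distrib[symmetric]
    by (intro sum_mono sq_add_le)
qed

lemma conv_diff_right:
  assumes "fsupp R f"
  shows "conv f (\<lambda>z. g1 z - g2 z) x = conv f g1 x - conv f g2 x"
  unfolding conv_window[OF assms] by (simp add: sum_subtractf algebra_simps)

lemma infsum_add_fsupp:
  assumes "fsupp R f" "fsupp R g"
  shows "(\<Sum>\<^sub>\<infinity>x. f x + g x) = (\<Sum>\<^sub>\<infinity>x. f x) + (\<Sum>\<^sub>\<infinity>x. g x)"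
  by (rule infsum_add; rule summable_window) (use fsuppD[OF assms(1)] fsuppD[OF assms(2)] in auto)

definition CD :: "real \<Rightarrow> real" where
  "CD \<omega> = CF \<omega> * sqrt (8 * 2 powr \<omega>)"

lemma CD_pos: "\<omega> > 0 \<Longrightarrow> CD \<omega> > 0"
  unfolding CD_def using CF_pos by simp

locale two =
  fixes \<omega> :: real and D1 D2 :: real and Ks Ls :: "nat \<Rightarrow> int \<Rightarrow> complex"
  assumes om: "\<omega> > 0" and D1: "D1 > 0" and D2: "D2 > 0"
    and bK: "\<And>k. cz_block \<omega> (2 ^ k) D1 (Ks k)" and bL: "\<And>k. cz_block \<omega> (2 ^ k) D2 (Ls k)"
begin

definition P :: "nat \<Rightarrow> int \<Rightarrow> complex" where "P u = (\<lambda>x. \<Sum>k\<in>{..u}. Ks k x)"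
definition Q :: "nat \<Rightarrow> int \<Rightarrow> complex" where "Q u = (\<lambda>x. \<Sum>l\<in>{..<u}. Ls l x)"
definition M :: "nat \<Rightarrow> int \<Rightarrow> complex" where "M u = (\<lambda>x. conv (P u) (Ls u) x + conv (Q u) (Ks u) x)"

lemma bkK: "blk \<omega> (2 ^ k) D1 (Ks k)" using bK om by unfold_locales auto
lemma bkL: "blk \<omega> (2 ^ k) D2 (Ls k)" using bL om by unfold_locales auto

lemma suppK: "k \<le> u \<Longrightarrow> fsupp (2 ^ u) (Ks k)"
  by (rule fsupp_mono[OF blk.supp[OF bkK]]) simp
lemma suppL: "k \<le> u \<Longrightarrow> fsupp (2 ^ u) (Ls k)"
  by (rule fsupp_mono[OF blk.supp[OF bkL]]) simp

lemma suppP: "fsupp (2 ^ u) (P u)" unfolding P_def by (rule fsupp_sum) (auto intro: suppK)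
lemma suppQ: "fsupp (2 ^ u) (Q u)" unfolding Q_def by (rule fsupp_sum) (auto intro: suppL)

lemma FT_P: "cmod (FT (P u) \<xi>) \<le> CF \<omega> * D1"
  unfolding P_def by (rule blocks_FT_bound[OF om bK _ D1]) simp
lemma FT_Q: "cmod (FT (Q u) \<xi>) \<le> CF \<omega> * D2"
  unfolding Q_def by (rule blocks_FT_bound[OF om bL _ D2]) simp

lemma suppM: "fsupp (2 ^ Suc u) (M u)"
proof -
  have "fsupp (2 ^ u + 2 ^ u) (conv (P u) (Ls u))" by (rule conv_fsupp[OF suppP suppL]) simp
  moreover have "fsupp (2 ^ u + 2 ^ u) (conv (Q u) (Ks u))" by (rule conv_fsupp[OF suppQ suppK]) simp
  ultimately have s: "fsupp (2 ^ Suc u) (conv (P u) (Ls u))" "fsupp (2 ^ Suc u) (conv (Q u) (Ks u))" by simp_all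
  show ?thesis unfolding M_def fsupp_def
  proof (intro allI impI)
    fix x assume "conv (P u) (Ls u) x + conv (Q u) (Ks u) x \<noteq> 0"
    then have "conv (P u) (Ls u) x \<noteq> 0 \<or> conv (Q u) (Ks u) x \<noteq> 0" by auto
    then show "- (2 ^ Suc u) \<le> x \<and> x \<le> 2 ^ Suc u" using s unfolding fsupp_def by blast
  qed
qed

lemma mean0M: "(\<Sum>\<^sub>\<infinity>x. M u x) = 0"
proof -
  have s1: "fsupp (2 ^ u + 2 ^ u) (conv (P u) (Ls u))" by (rule conv_fsupp[OF suppP suppL]) simp
  have s2: "fsupp (2 ^ u + 2 ^ u) (conv (Q u) (Ks u))" by (rule conv_fsupp[OF suppQ suppK]) simp
  have "(\<Sum>\<^sub>\<infinity>x. M u x) = FT (conv (P u) (Ls u)) 0 + FT (conv (Q u) (Ks u)) 0"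
    unfolding M_def FT_zero by (rule infsum_add_fsupp[OF s1 s2])
  also have "\<dots> = 0"
    using FT_conv[OF suppP[of u] suppL[of u u], of 0] FT_conv[OF suppQ[of u] suppK[of u u], of 0]
      blk.mean0[OF bkK] blk.mean0[OF bkL] by simp
  finally show ?thesis .
qed

lemma fsupp_diff_shift:
  assumes "fsupp R g" "0 \<le> R"
  shows "fsupp (R + \<bar>h\<bar>) (\<lambda>z. g (z + h) - g z)"
  unfolding fsupp_def
proof (intro allI impI)
  fix x assume "g (x + h) - g x \<noteq> 0"
  then have "g (x + h) \<noteq> 0 \<or> g x \<noteq> 0" by auto
  then show "- (R + \<bar>h\<bar>) \<le> x \<and> x \<le> R + \<bar>h\<bar>" using assms unfolding fsupp_def by force
qed

lemma l2M: "(\<Sum>\<^sub>\<infinity>x. (cmod (M u x))\<^sup>2) \<le> (CD \<omega> * D1 * D2)\<^sup>2 / real_of_int (2 ^ Suc u)"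
proof -
  define c where "c = CF \<omega>"
  define s :: real where "s = 2 ^ u"
  have s0: "s > 0" unfolding s_def by simp
  have s1: "fsupp (2 ^ Suc u) (conv (P u) (Ls u))"
    using conv_fsupp[OF suppP[of u] suppL[of u u]] by simp
  have s2: "fsupp (2 ^ Suc u) (conv (Q u) (Ks u))"
    using conv_fsupp[OF suppQ[of u] suppK[of u u]] by simp
  have c1: "(\<Sum>\<^sub>\<infinity>x. (cmod (conv (P u) (Ls u) x))\<^sup>2) \<le> (c * D1)\<^sup>2 * (D2\<^sup>2 / s)"
  proof -
    have "(\<Sum>\<^sub>\<infinity>x. (cmod (conv (P u) (Ls u) x))\<^sup>2) \<le> (c * D1)\<^sup>2 * (\<Sum>\<^sub>\<infinity>x. (cmod (Ls u x))\<^sup>2)"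
      unfolding c_def by (rule conv_L2_bound[OF suppP suppL[of u u] _ _ FT_P]) auto
    also have "\<dots> \<le> (c * D1)\<^sup>2 * (D2\<^sup>2 / s)"
      using blk.l2[OF bkL, of u] unfolding s_def by (intro mult_left_mono) auto
    finally show ?thesis .
  qed
  have c2: "(\<Sum>\<^sub>\<infinity>x. (cmod (conv (Q u) (Ks u) x))\<^sup>2) \<le> (c * D2)\<^sup>2 * (D1\<^sup>2 / s)"
  proof -
    have "(\<Sum>\<^sub>\<infinity>x. (cmod (conv (Q u) (Ks u) x))\<^sup>2) \<le> (c * D2)\<^sup>2 * (\<Sum>\<^sub>\<infinity>x. (cmod (Ks u x))\<^sup>2)"
      unfolding c_def by (rule conv_L2_bound[OF suppQ suppK[of u u] _ _ FT_Q]) auto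
    also have "\<dots> \<le> (c * D2)\<^sup>2 * (D1\<^sup>2 / s)"
      using blk.l2[OF bkK, of u] unfolding s_def by (intro mult_left_mono) auto
    finally show ?thesis .
  qed
  have "(\<Sum>\<^sub>\<infinity>x. (cmod (M u x))\<^sup>2) \<le> 2 * ((c * D1)\<^sup>2 * (D2\<^sup>2 / s)) + 2 * ((c * D2)\<^sup>2 * (D1\<^sup>2 / s))"
    unfolding M_def using infsum_sq_add[OF s1 s2] c1 c2 by linarith
  also have "\<dots> = 4 * c\<^sup>2 * D1\<^sup>2 * D2\<^sup>2 / s" by (simp add: field_simps power2_eq_square)
  also have "\<dots> \<le> 4 * c\<^sup>2 * D1\<^sup>2 * D2\<^sup>2 * 2 powr \<omega> / s"
  proof -
    have "1 \<le> (2::real) powr \<omega>" using om by (intro ge_one_powr_ge_zero) auto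
    moreover have "0 \<le> 4 * c\<^sup>2 * D1\<^sup>2 * D2\<^sup>2" by simp
    ultimately have "4 * c\<^sup>2 * D1\<^sup>2 * D2\<^sup>2 * 1 \<le> 4 * c\<^sup>2 * D1\<^sup>2 * D2\<^sup>2 * 2 powr \<omega>"
      by (intro mult_left_mono) auto
    then show ?thesis using s0 by (intro divide_right_mono) auto
  qed
  also have "\<dots> = (CD \<omega> * D1 * D2)\<^sup>2 / real_of_int (2 ^ Suc u)"
    unfolding CD_def c_def[symmetric] s_def by (simp add: power_mult_distrib field_simps)
  finally show ?thesis .
qed

lemma regM: "(\<Sum>\<^sub>\<infinity>x. (cmod (M u (x + h) - M u x))\<^sup>2)
   \<le> (CD \<omega> * D1 * D2)\<^sup>2 / real_of_int (2 ^ Suc u) * (real_of_int \<bar>h\<bar> / real_of_int (2 ^ Suc u)) powr \<omega>"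
proof -
  define c where "c = CF \<omega>"
  define s :: real where "s = 2 ^ u"
  define w where "w = (real_of_int \<bar>h\<bar> / s) powr \<omega>"
  define dL where "dL = (\<lambda>z. Ls u (z + h) - Ls u z)"
  define dK where "dK = (\<lambda>z. Ks u (z + h) - Ks u z)"
  have s0: "s > 0" unfolding s_def by simp
  have w0: "w \<ge> 0" unfolding w_def by simp
  have sdL: "fsupp (2 ^ u + \<bar>h\<bar>) dL" unfolding dL_def using fsupp_diff_shift[OF suppL[of u u], of h] by simp
  have sdK: "fsupp (2 ^ u + \<bar>h\<bar>) dK" unfolding dK_def using fsupp_diff_shift[OF suppK[of u u], of h] by simp
  have s1: "fsupp (2 ^ Suc u + \<bar>h\<bar>) (conv (P u) dL)"
    using conv_fsupp[OF suppP[of u] sdL] by (simp add: algebra_simps)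
  have s2: "fsupp (2 ^ Suc u + \<bar>h\<bar>) (conv (Q u) dK)"
    using conv_fsupp[OF suppQ[of u] sdK] by (simp add: algebra_simps)
  have eM: "M u (x + h) - M u x = conv (P u) dL x + conv (Q u) dK x" for x
    unfolding M_def dL_def dK_def conv_shift conv_diff_right[OF suppP] conv_diff_right[OF suppQ] by simp
  have c1: "(\<Sum>\<^sub>\<infinity>x. (cmod (conv (P u) dL x))\<^sup>2) \<le> (c * D1)\<^sup>2 * (D2\<^sup>2 / s * w)"
  proof -
    have "(\<Sum>\<^sub>\<infinity>x. (cmod (conv (P u) dL x))\<^sup>2) \<le> (c * D1)\<^sup>2 * (\<Sum>\<^sub>\<infinity>x. (cmod (dL x))\<^sup>2)"
      unfolding c_def by (rule conv_L2_bound[OF suppP sdL _ _ FT_P]) auto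
    also have "\<dots> \<le> (c * D1)\<^sup>2 * (D2\<^sup>2 / s * w)"
      using blk.reg[OF bkL, of u h] unfolding s_def w_def dL_def by (intro mult_left_mono) auto
    finally show ?thesis .
  qed
  have c2: "(\<Sum>\<^sub>\<infinity>x. (cmod (conv (Q u) dK x))\<^sup>2) \<le> (c * D2)\<^sup>2 * (D1\<^sup>2 / s * w)"
  proof -
    have "(\<Sum>\<^sub>\<infinity>x. (cmod (conv (Q u) dK x))\<^sup>2) \<le> (c * D2)\<^sup>2 * (\<Sum>\<^sub>\<infinity>x. (cmod (dK x))\<^sup>2)"
      unfolding c_def by (rule conv_L2_bound[OF suppQ sdK _ _ FT_Q]) auto
    also have "\<dots> \<le> (c * D2)\<^sup>2 * (D1\<^sup>2 / s * w)"
      using blk.reg[OF bkK, of u h] unfolding s_def w_def dK_def by (intro mult_left_mono) auto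
    finally show ?thesis .
  qed
  have "(\<Sum>\<^sub>\<infinity>x. (cmod (M u (x + h) - M u x))\<^sup>2) \<le> 2 * ((c * D1)\<^sup>2 * (D2\<^sup>2 / s * w)) + 2 * ((c * D2)\<^sup>2 * (D1\<^sup>2 / s * w))"
    unfolding eM using infsum_sq_add[OF s1 s2] c1 c2 by linarith
  also have "\<dots> = 4 * c\<^sup>2 * D1\<^sup>2 * D2\<^sup>2 / s * w" by (simp add: field_simps power2_eq_square)
  also have "\<dots> = (CD \<omega> * D1 * D2)\<^sup>2 / real_of_int (2 ^ Suc u) * (real_of_int \<bar>h\<bar> / real_of_int (2 ^ Suc u)) powr \<omega>"
  proof -
    have "w = (real_of_int \<bar>h\<bar> / real_of_int (2 ^ Suc u)) powr \<omega> * 2 powr \<omega>"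
      unfolding w_def s_def by (simp add: powr_mult[symmetric])
    then show ?thesis unfolding CD_def c_def[symmetric] s_def by (simp add: power_mult_distrib field_simps)
  qed
  finally show ?thesis .
qed

lemma blockM: "cz_block \<omega> (2 ^ Suc u) (CD \<omega> * D1 * D2) (M u)"
  unfolding cz_block_def
proof (intro conjI allI impI)
  show "0 < CD \<omega> * D1 * D2" using CD_pos[OF om] D1 D2 by simp
  show "(\<Sum>\<^sub>\<infinity>x. M u x) = 0" by (rule mean0M)
  fix x assume "M u x \<noteq> 0"
  then show "- (2 ^ Suc u) \<le> x" "x \<le> 2 ^ Suc u" using suppM[of u] unfolding fsupp_def by auto
next
  show "(\<Sum>\<^sub>\<infinity>x. (cmod (M u x))\<^sup>2) \<le> (CD \<omega> * D1 * D2)\<^sup>2 / real_of_int (2 ^ Suc u)" by (rule l2M)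
  fix h show "(\<Sum>\<^sub>\<infinity>x. (cmod (M u (x + h) - M u x))\<^sup>2)
   \<le> (CD \<omega> * D1 * D2)\<^sup>2 / real_of_int (2 ^ Suc u) * (real_of_int \<bar>h\<bar> / real_of_int (2 ^ Suc u)) powr \<omega>" by (rule regM)
qed

end


definition l2 :: "(int \<Rightarrow> complex) \<Rightarrow> bool" where
  "l2 f \<longleftrightarrow> (\<lambda>x. (cmod (f x))\<^sup>2) summable_on UNIV"

definition nrm :: "(int \<Rightarrow> complex) \<Rightarrow> real" where
  "nrm f = sqrt (\<Sum>\<^sub>\<infinity>x. (cmod (f x))\<^sup>2)"

lemma nrm_nonneg: "0 \<le> nrm f"
  unfolding nrm_def by (simp add: infsum_nonneg)

lemma finite_bound_summable:
  fixes \<phi> :: "'a \<Rightarrow> real"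
  assumes "\<And>x. 0 \<le> \<phi> x" "\<And>F. finite F \<Longrightarrow> sum \<phi> F \<le> B"
  shows "\<phi> summable_on UNIV \<and> infsum \<phi> UNIV \<le> B"
proof
  show s: "\<phi> summable_on UNIV"
    by (rule nonneg_bdd_above_summable_on) (use assms in \<open>auto intro!: bdd_aboveI2\<close>)
  show "infsum \<phi> UNIV \<le> B" by (rule infsum_le_finite_sums[OF s]) (use assms in auto)
qed

lemma l2_finite_le:
  assumes "l2 f" "finite Y"
  shows "L2_set (\<lambda>y. cmod (f y)) Y \<le> nrm f"
  unfolding L2_set_def nrm_def
  by (rule real_sqrt_le_mono, rule finite_sum_le_infsum) (use assms in \<open>auto simp: l2_def\<close>)

lemma L2_set_sum_le:
  fixes F :: "nat \<Rightarrow> 'a \<Rightarrow> real"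
  assumes "\<And>k y. 0 \<le> F k y"
  shows "L2_set (\<lambda>y. \<Sum>k<n. F k y) Y \<le> (\<Sum>k<n. L2_set (F k) Y)"
proof (induction n)
  case 0 then show ?case by (simp add: L2_set_def)
next
  case (Suc n)
  have "L2_set (\<lambda>y. \<Sum>k<Suc n. F k y) Y = L2_set (\<lambda>y. (\<Sum>k<n. F k y) + F n y) Y" by simp
  also have "\<dots> \<le> L2_set (\<lambda>y. \<Sum>k<n. F k y) Y + L2_set (F n) Y" by (rule L2_set_triangle_ineq)
  also have "\<dots> \<le> (\<Sum>k<Suc n. L2_set (F k) Y)" using Suc by simp
  finally show ?case .
qed

lemma mink_series:
  assumes l: "\<And>k. l2 (F k)" and sm: "summable (\<lambda>k. nrm (F k))" and sums: "\<And>x. (\<lambda>k. F k x) sums G x"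
  shows "l2 G \<and> nrm G \<le> (\<Sum>k. nrm (F k))"
proof -
  define S where "S = (\<Sum>k. nrm (F k))"
  have S0: "0 \<le> S" unfolding S_def by (intro suminf_nonneg sm nrm_nonneg)
  have fin: "(\<Sum>y\<in>Y. (cmod (G y))\<^sup>2) \<le> S\<^sup>2" if Y: "finite Y" for Y
  proof -
    have lim: "(\<lambda>n. \<Sum>y\<in>Y. (cmod (\<Sum>k<n. F k y))\<^sup>2) \<longlonglongrightarrow> (\<Sum>y\<in>Y. (cmod (G y))\<^sup>2)"
      using sums unfolding sums_def by (intro tendsto_sum tendsto_power tendsto_norm) auto
    have bnd: "(\<Sum>y\<in>Y. (cmod (\<Sum>k<n. F k y))\<^sup>2) \<le> S\<^sup>2" for n
    proof -
      have "L2_set (\<lambda>y. cmod (\<Sum>k<n. F k y)) Y \<le> L2_set (\<lambda>y. \<Sum>k<n. cmod (F k y)) Y"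
        by (rule L2_set_mono) (auto intro: norm_sum)
      also have "\<dots> \<le> (\<Sum>k<n. L2_set (\<lambda>y. cmod (F k y)) Y)" by (rule L2_set_sum_le) simp
      also have "\<dots> \<le> (\<Sum>k<n. nrm (F k))" by (intro sum_mono l2_finite_le l Y)
      also have "\<dots> \<le> S" unfolding S_def by (intro sum_le_suminf sm) (auto intro: nrm_nonneg)
      finally have "L2_set (\<lambda>y. cmod (\<Sum>k<n. F k y)) Y \<le> S" .
      then have "(L2_set (\<lambda>y. cmod (\<Sum>k<n. F k y)) Y)\<^sup>2 \<le> S\<^sup>2"
        by (intro power_mono) (auto intro: L2_set_nonneg)
      then show ?thesis unfolding L2_set_def by (simp add: sum_nonneg)
    qed
    show ?thesis by (rule LIMSEQ_le_const2[OF lim]) (use bnd in auto)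
  qed
  have "(\<lambda>x. (cmod (G x))\<^sup>2) summable_on UNIV \<and> (\<Sum>\<^sub>\<infinity>x. (cmod (G x))\<^sup>2) \<le> S\<^sup>2"
    by (rule finite_bound_summable) (use fin in auto)
  then have "(\<lambda>x. (cmod (G x))\<^sup>2) summable_on UNIV" "sqrt (\<Sum>\<^sub>\<infinity>x. (cmod (G x))\<^sup>2) \<le> sqrt (S\<^sup>2)"
    by (auto simp del: real_sqrt_abs intro: real_sqrt_le_mono)
  then show ?thesis unfolding l2_def nrm_def[of G] S_def[symmetric] using S0 by simp
qed

lemma cs_infsum:
  assumes "l2 f" "l2 g"
  shows "(\<lambda>y. f y * g y) summable_on UNIV \<and> cmod (\<Sum>\<^sub>\<infinity>y. f y * g y) \<le> nrm f * nrm g"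
proof -
  have fin: "(\<Sum>y\<in>Y. cmod (f y * g y)) \<le> nrm f * nrm g" if "finite Y" for Y
  proof -
    have "(\<Sum>y\<in>Y. cmod (f y * g y)) = (\<Sum>y\<in>Y. \<bar>cmod (f y)\<bar> * \<bar>cmod (g y)\<bar>)" by (simp add: norm_mult)
    also have "\<dots> \<le> L2_set (\<lambda>y. cmod (f y)) Y * L2_set (\<lambda>y. cmod (g y)) Y" by (rule L2_set_mult_ineq)
    also have "\<dots> \<le> nrm f * nrm g"
      by (intro mult_mono l2_finite_le assms that nrm_nonneg L2_set_nonneg)
    finally show ?thesis .
  qed
  have a: "(\<lambda>y. cmod (f y * g y)) summable_on UNIV \<and> (\<Sum>\<^sub>\<infinity>y. cmod (f y * g y)) \<le> nrm f * nrm g"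
    by (rule finite_bound_summable) (use fin in auto)
  then have s: "(\<lambda>y. f y * g y) summable_on UNIV"
    using summable_on_iff_abs_summable_on_complex by blast
  have "cmod (\<Sum>\<^sub>\<infinity>y. f y * g y) \<le> (\<Sum>\<^sub>\<infinity>y. cmod (f y * g y))"
    by (rule norm_infsum_bound) (use a in auto)
  then show ?thesis using s a by linarith
qed

lemma bij_refl_int': "bij_betw (\<lambda>z::int. c - z) UNIV UNIV"
  by (rule bij_betwI[where g="\<lambda>z. c - z"]) auto

lemma l2_refl:
  assumes "l2 g"
  shows "l2 (\<lambda>y. g (x - y)) \<and> nrm (\<lambda>y. g (x - y)) = nrm g"
proof -
  have "(\<lambda>y. (cmod (g (x - y)))\<^sup>2) summable_on UNIV"
    using summable_on_reindex_bij_betw[OF bij_refl_int'[of x], of "\<lambda>z. (cmod (g z))\<^sup>2"] assms unfolding l2_def by simp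
  moreover have "(\<Sum>\<^sub>\<infinity>y. (cmod (g (x - y)))\<^sup>2) = (\<Sum>\<^sub>\<infinity>y. (cmod (g y))\<^sup>2)"
    by (rule infsum_reindex_bij_betw[OF bij_refl_int'[of x], of "\<lambda>z. (cmod (g z))\<^sup>2"])
  ultimately show ?thesis unfolding l2_def nrm_def by simp
qed


lemma conv_sum_left:
  assumes "finite A" "\<And>k. k \<in> A \<Longrightarrow> fsupp R (F k)"
  shows "conv (\<lambda>x. \<Sum>k\<in>A. F k x) g x = (\<Sum>k\<in>A. conv (F k) g x)"
proof -
  have "conv (\<lambda>x. \<Sum>k\<in>A. F k x) g x = (\<Sum>y\<in>{-R..R}. (\<Sum>k\<in>A. F k y) * g (x - y))"
    by (rule conv_window[OF fsupp_sum[OF assms]])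
  also have "\<dots> = (\<Sum>k\<in>A. \<Sum>y\<in>{-R..R}. F k y * g (x - y))"
    by (simp add: sum_distrib_right sum.swap[of _ "{-R..R}"])
  also have "\<dots> = (\<Sum>k\<in>A. conv (F k) g x)"
    by (intro sum.cong refl conv_window[symmetric] assms(2))
  finally show ?thesis .
qed

lemma double_sum_max:
  fixes c :: "nat \<Rightarrow> nat \<Rightarrow> 'a::comm_monoid_add"
  shows "(\<Sum>k<N. \<Sum>l<N. c k l) = (\<Sum>u<N. (\<Sum>k\<in>{..u}. c k u) + (\<Sum>l<u. c u l))"
proof (induction N)
  case 0 then show ?case by simp
next
  case (Suc N)
  have "(\<Sum>k<Suc N. \<Sum>l<Suc N. c k l) = (\<Sum>k<N. \<Sum>l<N. c k l) + ((\<Sum>k<N. c k N) + c N N + (\<Sum>l<N. c N l))"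
    by (simp add: sum.distrib algebra_simps)
  also have "(\<Sum>k<N. c k N) + c N N = (\<Sum>k\<in>{..N}. c k N)"
    by (simp add: lessThan_Suc_atMost[symmetric])
  finally show ?case using Suc by (simp add: algebra_simps)
qed

lemma has_sum_comb4:
  fixes f0 f1 f2 f3 :: "'a \<Rightarrow> complex"
  assumes "(f0 has_sum a0) A" "(f1 has_sum a1) A" "(f2 has_sum a2) A" "(f3 has_sum a3) A"
  shows "((\<lambda>x. f0 x - f1 x - f2 x + f3 x) has_sum (a0 - a1 - a2 + a3)) A"
proof -
  have n1: "((\<lambda>x. - f1 x) has_sum (-a1)) A" using has_sum_uminus[of f1 A "-a1"] assms by simp
  have n2: "((\<lambda>x. - f2 x) has_sum (-a2)) A" using has_sum_uminus[of f2 A "-a2"] assms by simp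
  have "((\<lambda>x. f0 x + - f1 x + - f2 x + f3 x) has_sum (a0 + -a1 + -a2 + a3)) A"
    by (intro has_sum_add assms n1 n2)
  then show ?thesis unfolding diff_conv_add_uminus .
qed

context two begin

lemma l2K: "l2 (Ks k)"
  unfolding l2_def by (rule summable_window[of "2^k"]) (use fsuppD[OF blk.supp[OF bkK]] in auto)
lemma l2L: "l2 (Ls k)"
  unfolding l2_def by (rule summable_window[of "2^k"]) (use fsuppD[OF blk.supp[OF bkL]] in auto)

lemma nrm_blk:
  assumes "cz_block \<omega> (2 ^ k) D G"
  shows "nrm G \<le> D * (1 / sqrt 2) ^ k"
proof -
  have "nrm G \<le> sqrt (D\<^sup>2 / 2 ^ k)"
    unfolding nrm_def using assms unfolding cz_block_def by (auto intro: real_sqrt_le_mono)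
  also have "\<dots> = D * (1 / sqrt 2) ^ k"
    using assms unfolding cz_block_def by (simp add: real_sqrt_divide real_sqrt_power power_divide)
  finally show ?thesis .
qed

lemma summ_nrm:
  assumes "\<And>k. cz_block \<omega> (2 ^ k) D (F k)"
  shows "summable (\<lambda>k. nrm (F k))"
proof (rule summable_comparison_test')
  show "summable (\<lambda>k. D * (1 / sqrt 2) ^ k)" by (intro summable_mult summable_geometric) simp
  show "norm (nrm (F k)) \<le> D * (1 / sqrt 2) ^ k" for k using nrm_blk[OF assms[of k]] nrm_nonneg by simp
qed

lemma sK: "summable (\<lambda>k. nrm (Ks k))" by (rule summ_nrm[OF bK])
lemma sL: "summable (\<lambda>k. nrm (Ls k))" by (rule summ_nrm[OF bL])

lemma conv_partial: "conv (\<lambda>x. \<Sum>k<N. Ks k x) (\<lambda>x. \<Sum>l<N. Ls l x) x = (\<Sum>u<N. M u x)"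
proof -
  define c where "c k l = conv (Ks k) (Ls l) x" for k l
  have "conv (\<lambda>x. \<Sum>k<N. Ks k x) (\<lambda>x. \<Sum>l<N. Ls l x) x = (\<Sum>k<N. \<Sum>l<N. c k l)"
    unfolding c_def by (rule conv_sums[of _ _ "2^N"]) (auto intro: suppK)
  also have "\<dots> = (\<Sum>u<N. (\<Sum>k\<in>{..u}. c k u) + (\<Sum>l<u. c u l))" by (rule double_sum_max)
  also have "\<dots> = (\<Sum>u<N. M u x)"
  proof (intro sum.cong refl)
    fix u
    have "conv (P u) (Ls u) x = (\<Sum>k\<in>{..u}. c k u)"
      unfolding P_def c_def by (rule conv_sum_left[of _ "2^u"]) (auto intro: suppK)
    moreover have "conv (Q u) (Ks u) x = (\<Sum>l<u. c u l)"
      unfolding Q_def c_def by (subst conv_sum_left[of _ "2^u"]) (auto intro: suppL simp: conv_comm)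
    ultimately show "(\<Sum>k\<in>{..u}. c k u) + (\<Sum>l<u. c u l) = M u x" unfolding M_def by simp
  qed
  finally show ?thesis .
qed

lemma M_sums:
  assumes sumK: "\<And>x. (\<lambda>k. Ks k x) sums K x" and sumL: "\<And>x. (\<lambda>k. Ls k x) sums L x"
  shows "(\<lambda>u. M u x) sums conv K L x"
proof -
  have mK: "l2 K" by (rule mink_series[OF l2K sK sumK, THEN conjunct1])
  have mL: "l2 L" by (rule mink_series[OF l2L sL sumL, THEN conjunct1])
  define tK where "tK N = (\<Sum>k. nrm (Ks (k + N)))" for N
  define tL where "tL N = (\<Sum>k. nrm (Ls (k + N)))" for N
  have tK0: "tK \<longlonglongrightarrow> 0" unfolding tK_def by (rule suminf_exist_split2[OF sK])
  have tL0: "tL \<longlonglongrightarrow> 0" unfolding tL_def by (rule suminf_exist_split2[OF sL])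
  have est: "cmod (conv K L x - (\<Sum>u<N. M u x)) \<le> tK N * nrm L + nrm K * tL N + tK N * tL N" for N
  proof -
    define dK where "dK = (\<lambda>y. K y - (\<Sum>k<N. Ks k y))"
    define dL where "dL = (\<lambda>y. L y - (\<Sum>k<N. Ls k y))"
    have hK: "l2 dK \<and> nrm dK \<le> tK N" unfolding dK_def tK_def
      by (rule mink_series[OF l2K summable_ignore_initial_segment[OF sK] sums_split_initial_segment[OF sumK]])
    have hL: "l2 dL \<and> nrm dL \<le> tL N" unfolding dL_def tL_def
      by (rule mink_series[OF l2L summable_ignore_initial_segment[OF sL] sums_split_initial_segment[OF sumL]])
    define L' where "L' = (\<lambda>y. L (x - y))"
    define dL' where "dL' = (\<lambda>y. dL (x - y))"
    have rL: "l2 L' \<and> nrm L' = nrm L" unfolding L'_def by (rule l2_refl[OF mL])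
    have rdL: "l2 dL' \<and> nrm dL' = nrm dL" unfolding dL'_def by (rule l2_refl) (use hL in blast)
    have c0: "(\<lambda>y. K y * L' y) summable_on UNIV" using cs_infsum[OF mK] rL by blast
    have c1: "(\<lambda>y. dK y * L' y) summable_on UNIV \<and> cmod (\<Sum>\<^sub>\<infinity>y. dK y * L' y) \<le> nrm dK * nrm L'"
      by (rule cs_infsum) (use hK rL in blast)+
    have c2: "(\<lambda>y. K y * dL' y) summable_on UNIV \<and> cmod (\<Sum>\<^sub>\<infinity>y. K y * dL' y) \<le> nrm K * nrm dL'"
      by (rule cs_infsum) (use mK rdL in blast)+
    have c3: "(\<lambda>y. dK y * dL' y) summable_on UNIV \<and> cmod (\<Sum>\<^sub>\<infinity>y. dK y * dL' y) \<le> nrm dK * nrm dL'"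
      by (rule cs_infsum) (use hK rdL in blast)+
    define I0 where "I0 = (\<Sum>\<^sub>\<infinity>y. K y * L' y)"
    define I1 where "I1 = (\<Sum>\<^sub>\<infinity>y. dK y * L' y)"
    define I2 where "I2 = (\<Sum>\<^sub>\<infinity>y. K y * dL' y)"
    define I3 where "I3 = (\<Sum>\<^sub>\<infinity>y. dK y * dL' y)"
    have hs: "((\<lambda>y. K y * L' y - dK y * L' y - K y * dL' y + dK y * dL' y) has_sum (I0 - I1 - I2 + I3)) UNIV"
      unfolding I0_def I1_def I2_def I3_def
      by (intro has_sum_comb4 has_sum_infsum) (use c0 c1 c2 c3 in blast)+
    have "(\<Sum>u<N. M u x) = conv (\<lambda>y. \<Sum>k<N. Ks k y) (\<lambda>y. \<Sum>l<N. Ls l y) x" by (rule conv_partial[symmetric])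
    also have "\<dots> = (\<Sum>\<^sub>\<infinity>y. K y * L' y - dK y * L' y - K y * dL' y + dK y * dL' y)"
      unfolding conv_def by (intro infsum_cong) (simp add: dK_def dL'_def dL_def L'_def algebra_simps)
    also have "\<dots> = I0 - I1 - I2 + I3" by (rule infsumI[OF hs])
    finally have e: "conv K L x - (\<Sum>u<N. M u x) = I1 + I2 - I3" unfolding I0_def conv_def L'_def by simp
    have "cmod (I1 + I2 - I3) \<le> cmod I1 + cmod I2 + cmod I3"
    proof -
      have "cmod (I1 + I2 - I3) \<le> cmod (I1 + I2) + cmod I3" by (rule norm_triangle_ineq4)
      moreover have "cmod (I1 + I2) \<le> cmod I1 + cmod I2" by (rule norm_triangle_ineq)
      ultimately show ?thesis by linarith
    qed
    also have "\<dots> \<le> tK N * nrm L + nrm K * tL N + tK N * tL N"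
    proof (intro add_mono)
      have "nrm dK * nrm L \<le> tK N * nrm L" using hK nrm_nonneg[of L] by (intro mult_right_mono) auto
      then show "cmod I1 \<le> tK N * nrm L" using c1 rL unfolding I1_def by auto
      have "nrm K * nrm dL \<le> nrm K * tL N" using hL nrm_nonneg[of K] by (intro mult_left_mono) auto
      then show "cmod I2 \<le> nrm K * tL N" using c2 rdL unfolding I2_def by auto
      have "nrm dK * nrm dL \<le> tK N * tL N" using hK hL nrm_nonneg[of dK] nrm_nonneg[of dL] by (intro mult_mono) auto
      then show "cmod I3 \<le> tK N * tL N" using c3 rdL unfolding I3_def by auto
    qed
    finally show ?thesis unfolding e .
  qed
  have lim0: "(\<lambda>N. tK N * nrm L + nrm K * tL N + tK N * tL N) \<longlonglongrightarrow> 0"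
    using tendsto_add[OF tendsto_add[OF tendsto_mult_left_zero[OF tK0] tendsto_mult_right_zero[OF tL0]] tendsto_mult_zero[OF tK0 tL0]]
    by simp
  have "(\<lambda>N. conv K L x - (\<Sum>u<N. M u x)) \<longlonglongrightarrow> 0"
    by (rule Lim_null_comparison[OF _ lim0]) (use est in auto)
  then have "(\<lambda>N. conv K L x - (conv K L x - (\<Sum>u<N. M u x))) \<longlonglongrightarrow> conv K L x - 0"
    by (intro tendsto_diff tendsto_const)
  then show ?thesis unfolding sums_def by simp
qed

end


lemma zero_block:
  assumes "D > 0" "s > 0"
  shows "cz_block \<omega> s D (\<lambda>_. 0)"
  unfolding cz_block_def using assms by auto

lemma rep_blocks:
  assumes "cz_rep \<omega> j D K"
  shows "D > 0 \<and> (\<exists>Ks. (\<forall>k<j. Ks k = (\<lambda>_. 0)) \<and> (\<forall>k. cz_block \<omega> (2 ^ k) D (Ks k)) \<and> (\<forall>x. (\<lambda>k. Ks k x) sums K x))"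
proof -
  obtain Ks where Ks: "\<forall>k<j. Ks k = (\<lambda>_. 0)" "\<forall>k\<ge>j. cz_block \<omega> (2 ^ k) D (Ks k)" "\<forall>x. (\<lambda>k. Ks k x) sums K x"
    using assms unfolding cz_rep_def by blast
  have D0: "D > 0" using Ks(2) unfolding cz_block_def by auto
  have "\<forall>k. cz_block \<omega> (2 ^ k) D (Ks k)"
  proof
    fix k show "cz_block \<omega> (2 ^ k) D (Ks k)"
      using Ks zero_block[OF D0, of "2 ^ k" \<omega>] by (cases "k < j") auto
  qed
  then show ?thesis using D0 Ks by blast
qed

lemma rep_pos: "cz_rep \<omega> j D K \<Longrightarrow> D > 0"
  using rep_blocks by blast

lemma rep_conv:
  assumes om: "\<omega> > 0" and rK: "cz_rep \<omega> j D1 K" and rL: "cz_rep \<omega> j D2 L"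
  shows "cz_rep \<omega> j (CD \<omega> * D1 * D2) (conv K L)"
proof -
  obtain Ks where Ks: "\<forall>k<j. Ks k = (\<lambda>_. 0)" "\<forall>k. cz_block \<omega> (2 ^ k) D1 (Ks k)" "\<forall>x. (\<lambda>k. Ks k x) sums K x"
    using rep_blocks[OF rK] by blast
  obtain Ls where Ls: "\<forall>k<j. Ls k = (\<lambda>_. 0)" "\<forall>k. cz_block \<omega> (2 ^ k) D2 (Ls k)" "\<forall>x. (\<lambda>k. Ls k x) sums L x"
    using rep_blocks[OF rL] by blast
  have D1: "D1 > 0" using rep_pos[OF rK] .
  have D2: "D2 > 0" using rep_pos[OF rL] .
  interpret two \<omega> D1 D2 Ks Ls using om D1 D2 Ks(2) Ls(2) by unfold_locales auto
  define Ns where "Ns k = (if k = 0 then (\<lambda>_. 0) else M (k - 1))" for k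
  have Mzero: "M u = (\<lambda>_. 0)" if "u < j" for u
  proof -
    have "P u = (\<lambda>_. 0)" unfolding P_def using Ks(1) that by (auto intro!: sum.neutral)
    moreover have "Q u = (\<lambda>_. 0)" unfolding Q_def using Ls(1) that by (auto intro!: sum.neutral)
    ultimately show ?thesis unfolding M_def conv_def by simp
  qed
  have D'0: "CD \<omega> * D1 * D2 > 0" using CD_pos[OF om] D1 D2 by simp
  show ?thesis unfolding cz_rep_def
  proof (intro exI[of _ Ns] conjI allI impI)
    fix k assume "k < j"
    then show "Ns k = (\<lambda>_. 0)" unfolding Ns_def using Mzero[of "k - 1"] by auto
  next
    fix k assume "j \<le> k"
    show "cz_block \<omega> (2 ^ k) (CD \<omega> * D1 * D2) (Ns k)"
    proof (cases k)
      case 0 then show ?thesis unfolding Ns_def using zero_block[OF D'0, of "2^0" \<omega>] by simp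
    next
      case (Suc u) then show ?thesis unfolding Ns_def using blockM[of u] by simp
    qed
  next
    fix x
    have h: "(\<lambda>u. Ns (Suc u) x) sums conv K L x" unfolding Ns_def using M_sums[of K L x] Ks(3) Ls(3) by simp
    have n0: "Ns 0 x = 0" unfolding Ns_def by simp
    show "(\<lambda>k. Ns k x) sums conv K L x" using h sums_Suc_iff[of "\<lambda>k. Ns k x" "conv K L x"] n0 by simp
  qed
qed

lemma inf_le_mult:
  fixes S :: "real set"
  assumes "S \<noteq> {}" "\<And>x. x \<in> S \<Longrightarrow> 0 < x" "\<And>x. x \<in> S \<Longrightarrow> a \<le> c * x" "0 \<le> c"
  shows "a \<le> c * Inf S"
proof (cases "c = 0")
  case True
  obtain x where "x \<in> S" using assms(1) by blast
  then show ?thesis using assms(3) True by fastforce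
next
  case False
  then have c: "c > 0" using assms(4) by simp
  have "a / c \<le> Inf S"
    by (rule cInf_greatest[OF assms(1)]) (use assms(3) c in \<open>auto simp: field_simps\<close>)
  then show ?thesis using c by (simp add: field_simps)
qed

theorem lemma2p1:
  fixes \<omega> :: real
  assumes "\<omega> > 0"
  shows "\<exists>C>0. \<forall>(j::nat) K L.
           cz_kernel_from \<omega> j K \<longrightarrow> cz_kernel_from \<omega> j L \<longrightarrow>
           cz_kernel_from \<omega> j (conv K L) \<and>
           cz_norm_from \<omega> j (conv K L) \<le> C * cz_norm_from \<omega> j K * cz_norm_from \<omega> j L"
proof (intro exI[of _ "CD \<omega>"] conjI allI impI)
  show "CD \<omega> > 0" by (rule CD_pos[OF assms])
  fix j K L assume hK: "cz_kernel_from \<omega> j K" and hL: "cz_kernel_from \<omega> j L"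
  obtain D1 where D1: "cz_rep \<omega> j D1 K" using hK unfolding cz_kernel_from_def by blast
  obtain D2 where D2: "cz_rep \<omega> j D2 L" using hL unfolding cz_kernel_from_def by blast
  show "cz_kernel_from \<omega> j (conv K L)" unfolding cz_kernel_from_def using rep_conv[OF assms D1 D2] by blast
  define SK where "SK = {D. cz_rep \<omega> j D K}"
  define SL where "SL = {D. cz_rep \<omega> j D L}"
  define SC where "SC = {D. cz_rep \<omega> j D (conv K L)}"
  have SKne: "SK \<noteq> {}" "\<And>x. x \<in> SK \<Longrightarrow> 0 < x" unfolding SK_def using D1 rep_pos by auto
  have SLne: "SL \<noteq> {}" "\<And>x. x \<in> SL \<Longrightarrow> 0 < x" unfolding SL_def using D2 rep_pos by auto
  have bddC: "bdd_below SC" unfolding SC_def by (rule bdd_belowI[of _ 0]) (auto dest: rep_pos intro: less_imp_le)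
  have C0: "CD \<omega> > 0" by (rule CD_pos[OF assms])
  have InfK: "0 \<le> Inf SK" by (rule cInf_greatest[OF SKne(1)]) (use SKne(2) in \<open>auto intro: less_imp_le\<close>)
  have step: "Inf SC \<le> (CD \<omega> * Inf SK) * d2" if d2: "d2 \<in> SL" for d2
  proof -
    have cd2: "0 \<le> CD \<omega> * d2" using C0 SLne(2)[OF d2] by (simp add: less_imp_le)
    have "Inf SC \<le> (CD \<omega> * d2) * Inf SK"
    proof (rule inf_le_mult[OF SKne _ cd2])
      fix d1 assume "d1 \<in> SK"
      then have "CD \<omega> * d1 * d2 \<in> SC" using d2 rep_conv[OF assms] unfolding SK_def SL_def SC_def by blast
      then have "Inf SC \<le> CD \<omega> * d1 * d2" by (rule cInf_lower[OF _ bddC])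
      then show "Inf SC \<le> CD \<omega> * d2 * d1" by (simp add: algebra_simps)
    qed
    then show ?thesis by (simp add: algebra_simps)
  qed
  have "Inf SC \<le> (CD \<omega> * Inf SK) * Inf SL"
  proof (rule inf_le_mult[OF SLne step])
    show "0 \<le> CD \<omega> * Inf SK" using C0 InfK by (intro mult_nonneg_nonneg) auto
  qed
  then show "cz_norm_from \<omega> j (conv K L) \<le> CD \<omega> * cz_norm_from \<omega> j K * cz_norm_from \<omega> j L"
    unfolding cz_norm_from_def SK_def SL_def SC_def by simp
qed

end
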